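(* Let $f \in \Bbbk[t]\setminus\Bbbk$ and let $L$ be a Lie subalgebra of $L(f)$ of finite codimension in $L(f)$. Then there exists $g \in \Bbbk[t]\setminus\{0\}$ with $f'g\in\Bbbk[f]$ such that $L(f,g) \subseteq L$.
   Context: $\Bbbk$ is a field of characteristic zero. $\mathbb{W}_1 = \Bbbk[t]\partial$, $\partial = d/dt$, with bracket $[f\partial, g\partial] = (fg'-f'g)\partial$. For $f,g \in \Bbbk[t]\setminus\{0\}$ with $f'g \in \Bbbk[f]$, $L(f,g) = \Bbbk[f]\,g\partial \subseteq \mathbb{W}_1$. $g_f$ is the unique monic polynomial of minimal degree with $f'g_f \in \Bbbk[f]$, and $L(f) = L(f,g_f)$. *)

theory Defs
  imports "HOL-Computational_Algebra.Polynomial"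
begin

text \<open>We identify the Witt algebra W_1 = k[t] d/dt with k[t]: the polynomial g stands for g d/dt.\<close>

definition wbr :: "'a::field_char_0 poly \<Rightarrow> 'a poly \<Rightarrow> 'a poly" where
  "wbr a b = a * pderiv b - pderiv a * b"

definition in_kf :: "'a::field_char_0 poly \<Rightarrow> 'a poly \<Rightarrow> bool" where
  "in_kf f q \<longleftrightarrow> (\<exists>p. q = pcompose p f)"

definition admissible :: "'a::field_char_0 poly \<Rightarrow> 'a poly \<Rightarrow> bool" where
  "admissible f g \<longleftrightarrow> g \<noteq> 0 \<and> in_kf f (pderiv f * g)"

definition Lfg :: "'a::field_char_0 poly \<Rightarrow> 'a poly \<Rightarrow> 'a poly set" where
  "Lfg f g = {pcompose p f * g | p. True}"

definition gf :: "'a::field_char_0 poly \<Rightarrow> 'a poly" where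
  "gf f = (THE g. admissible f g \<and> lead_coeff g = 1 \<and>
                  (\<forall>h. admissible f h \<longrightarrow> degree g \<le> degree h))"

definition Lf :: "'a::field_char_0 poly \<Rightarrow> 'a poly set" where
  "Lf f = Lfg f (gf f)"

definition lie_subalg :: "'a::field_char_0 poly set \<Rightarrow> bool" where
  "lie_subalg L \<longleftrightarrow> 0 \<in> L \<and> (\<forall>x\<in>L. \<forall>y\<in>L. x + y \<in> L) \<and>
     (\<forall>c. \<forall>x\<in>L. smult c x \<in> L) \<and> (\<forall>x\<in>L. \<forall>y\<in>L. wbr x y \<in> L)"

definition fin_codim :: "'a::field_char_0 poly set \<Rightarrow> 'a poly set \<Rightarrow> bool" where
  "fin_codim L M \<longleftrightarrow> (\<exists>B. finite B \<and>
     (\<forall>x\<in>M. \<exists>l\<in>L. \<exists>c. x = l + (\<Sum>b\<in>B. smult (c b) b)))"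

end

theory Submission
  imports Defs
begin

lemma dep_lemma:
  fixes v :: "'i \<Rightarrow> 'k \<Rightarrow> 'a::field"
  assumes "finite S" 
  shows "finite I \<Longrightarrow> card I > card S \<Longrightarrow> (\<forall>i\<in>I. \<forall>j. j \<notin> S \<longrightarrow> v i j = 0) \<Longrightarrow>
    \<exists>la. (\<exists>i\<in>I. la i \<noteq> 0) \<and> (\<forall>j. (\<Sum>i\<in>I. la i * v i j) = 0)"
  using assms
proof (induction S arbitrary: I v rule: finite_induct)
  case empty
  then obtain i where "i \<in> I" by fastforce
  then show ?case using empty by (intro exI[of _ "\<lambda>_. 1"]) auto
next
  case (insert s S)
  show ?case
  proof (cases "\<forall>i\<in>I. v i s = 0")
    case True
    have "\<forall>i\<in>I. \<forall>j. j \<notin> S \<longrightarrow> v i j = 0" using True insert.prems by (metis insert_iff)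
    moreover have "card I > card S" using insert by auto
    ultimately show ?thesis using insert.IH insert.prems(1) by blast
  next
    case False
    then obtain i0 where i0: "i0 \<in> I" "v i0 s \<noteq> 0" by auto
    define w where "w i j = v i j - (v i s / v i0 s) * v i0 j" for i j
    have "\<forall>i\<in>I - {i0}. \<forall>j. j \<notin> S \<longrightarrow> w i j = 0"
    proof (intro ballI allI impI)
      fix i j assume "i \<in> I - {i0}" "j \<notin> S"
      show "w i j = 0"
      proof (cases "j = s")
        case True then show ?thesis using i0 by (simp add: w_def)
      next
        case False then show ?thesis using insert.prems(3) i0 \<open>i \<in> I - {i0}\<close> \<open>j \<notin> S\<close>
          by (simp add: w_def)
      qed
    qed
    moreover have "card (I - {i0}) > card S" using insert i0 by auto
    moreover have "finite (I - {i0})" using insert by auto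
    ultimately obtain mu where mu_: "\<exists>i\<in>I - {i0}. mu i \<noteq> 0" "\<forall>j. (\<Sum>i\<in>I - {i0}. mu i * w i j) = 0"
      using insert.IH by blast
    define la where "la i = (if i = i0 then - (\<Sum>i\<in>I - {i0}. mu i * v i s) / v i0 s else mu i)" for i
    have "(\<Sum>i\<in>I. la i * v i j) = 0" for j
    proof -
      have "(\<Sum>i\<in>I. la i * v i j) = la i0 * v i0 j + (\<Sum>i\<in>I - {i0}. la i * v i j)"
        using i0 insert.prems(1) by (simp add: sum.remove)
      also have "(\<Sum>i\<in>I - {i0}. la i * v i j) = (\<Sum>i\<in>I - {i0}. mu i * v i j)"
        by (rule sum.cong) (auto simp: la_def)
      also have "\<dots> = (\<Sum>i\<in>I - {i0}. mu i * w i j) + (\<Sum>i\<in>I - {i0}. mu i * v i s) / v i0 s * v i0 j"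
        proof -
          have "(\<Sum>i\<in>I - {i0}. mu i * w i j) = (\<Sum>i\<in>I - {i0}. mu i * v i j) - (\<Sum>i\<in>I - {i0}. mu i * v i s / v i0 s * v i0 j)"
            by (simp add: w_def right_diff_distrib sum_subtractf mult.assoc)
          moreover have "(\<Sum>i\<in>I - {i0}. mu i * v i s / v i0 s * v i0 j) = (\<Sum>i\<in>I - {i0}. mu i * v i s) / v i0 s * v i0 j"
            by (simp add: sum_distrib_right sum_divide_distrib)
          ultimately show ?thesis by simp
        qed
      finally show ?thesis using mu_(2) i0(2) by (simp add: la_def field_simps)
    qed
    moreover have "\<exists>i\<in>I. la i \<noteq> 0" using mu_(1) by (auto simp: la_def)
    ultimately show ?thesis by blast
  qed
qed


lemma span_lemma:
  fixes vec :: "'a::field poly \<Rightarrow> 'k \<Rightarrow> 'a"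
  assumes "finite S"
  shows "(\<forall>x\<in>U. \<forall>y\<in>U. x + y \<in> U) \<Longrightarrow> (\<forall>c. \<forall>x\<in>U. smult c x \<in> U) \<Longrightarrow>
    (\<forall>x\<in>U. \<forall>y\<in>U. \<forall>j. vec (x+y) j = vec x j + vec y j) \<Longrightarrow>
    (\<forall>c. \<forall>x\<in>U. \<forall>j. vec (smult c x) j = c * vec x j) \<Longrightarrow>
    (\<forall>x\<in>U. \<forall>j. j \<notin> S \<longrightarrow> vec x j = 0) \<Longrightarrow>
    \<exists>C. finite C \<and> C \<subseteq> U \<and> (\<forall>x\<in>U. \<exists>mu. \<forall>j. vec x j = (\<Sum>c\<in>C. mu c * vec c j))"
  using assms
proof (induction S arbitrary: U rule: finite_induct)
  case empty
  then show ?case by (intro exI[of _ "{}"]) auto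
next
  case (insert s S)
  show ?case
  proof (cases "\<forall>x\<in>U. vec x s = 0")
    case True
    have "\<forall>x\<in>U. \<forall>j. j \<notin> S \<longrightarrow> vec x j = 0" using True insert.prems by (metis insert_iff)
    then show ?thesis using insert.IH[OF insert.prems(1-4)] by simp
  next
    case False
    then obtain x0 where x0: "x0 \<in> U" "vec x0 s \<noteq> 0" by auto
    define U' where "U' = {x\<in>U. vec x s = 0}"
    have h1: "\<forall>x\<in>U'. \<forall>y\<in>U'. x + y \<in> U'" using insert.prems(1,3) by (auto simp: U'_def)
    have h2: "\<forall>c. \<forall>x\<in>U'. smult c x \<in> U'" using insert.prems(2,4) by (auto simp: U'_def)
    have h3: "\<forall>x\<in>U'. \<forall>y\<in>U'. \<forall>j. vec (x+y) j = vec x j + vec y j" using insert.prems(3) by (auto simp: U'_def)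
    have h4: "\<forall>c. \<forall>x\<in>U'. \<forall>j. vec (smult c x) j = c * vec x j" using insert.prems(4) by (auto simp: U'_def)
    have h5: "\<forall>x\<in>U'. \<forall>j. j \<notin> S \<longrightarrow> vec x j = 0"
    proof (intro ballI allI impI)
      fix x j assume "x \<in> U'" "j \<notin> S"
      then show "vec x j = 0" using insert.prems(5) by (cases "j = s") (auto simp: U'_def)
    qed
    obtain C' where C': "finite C'" "C' \<subseteq> U'" "\<forall>x\<in>U'. \<exists>mu. \<forall>j. vec x j = (\<Sum>c\<in>C'. mu c * vec c j)"
      using insert.IH[OF h1 h2 h3 h4 h5] by blast
    have x0C: "x0 \<notin> C'" using C'(2) x0 by (auto simp: U'_def)
    have "\<forall>x\<in>U. \<exists>mu. \<forall>j. vec x j = (\<Sum>c\<in>insert x0 C'. mu c * vec c j)"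
    proof
      fix x assume x: "x \<in> U"
      define a where "a = vec x s / vec x0 s"
      have sx0: "smult (-a) x0 \<in> U" using insert.prems(2) x0 by blast
      have e1: "vec (x + smult (-a) x0) j = vec x j + vec (smult (-a) x0) j" for j
        using insert.prems(3) x sx0 by blast
      have e2: "vec (smult (-a) x0) j = (-a) * vec x0 j" for j using insert.prems(4) x0 by blast
      have "vec (x + smult (-a) x0) s = vec x s + (-a) * vec x0 s"
        by (simp only: e1 e2)
      also have "\<dots> = 0" using x0(2) by (simp add: a_def)
      finally have v0: "vec (x + smult (-a) x0) s = 0" .
      have xU: "x + smult (-a) x0 \<in> U'" 
      proof -
        have "x + smult (-a) x0 \<in> U" using insert.prems(1) x sx0 by blast
        then show ?thesis using v0 unfolding U'_def by blast
      qed
      then obtain mu where mu: "\<forall>j. vec (x + smult (-a) x0) j = (\<Sum>c\<in>C'. mu c * vec c j)" using C'(3) by blast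
      have "vec x j = (\<Sum>c\<in>insert x0 C'. (mu(x0 := a)) c * vec c j)" for j
      proof -
        have "vec (x + smult (-a) x0) j = vec x j - a * vec x0 j"
          by (simp only: e1 e2) simp
        moreover have "(\<Sum>c\<in>C'. (mu(x0 := a)) c * vec c j) = (\<Sum>c\<in>C'. mu c * vec c j)"
          using x0C by (intro sum.cong) auto
        ultimately show ?thesis using mu x0C C'(1) by simp
      qed
      then show "\<exists>mu. \<forall>j. vec x j = (\<Sum>c\<in>insert x0 C'. mu c * vec c j)" by blast
    qed
    moreover have "insert x0 C' \<subseteq> U" using C'(2) x0 by (auto simp: U'_def)
    ultimately show ?thesis using C'(1) by (intro exI[of _ "insert x0 C'"]) auto
  qed
qed


lemma pcompose_monom': "pcompose (monom a n) f = smult a (f ^ n)"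
proof (induction n)
  case 0 then show ?case by (simp add: monom_0)
next
  case (Suc n)
  have "monom a (Suc n) = monom a n * [:0,1:]"
    by (simp add: monom_Suc monom_altdef smult_monom)
  then have "pcompose (monom a (Suc n)) f = pcompose (monom a n) f * f"
    by (simp add: pcompose_mult pcompose_pCons mult.commute)
  then show ?case using Suc by (simp add: mult.commute)
qed

lemma exists_mult_in_kf:
  fixes f d :: "'a::field poly"
  assumes "d \<noteq> 0" "degree f > 0"
  shows "\<exists>P. P \<noteq> 0 \<and> d dvd pcompose P f"
proof -
  define v where "v i j = coeff (f ^ i mod d) j" for i j
  have supp: "\<forall>i\<in>{..degree d}. \<forall>j. j \<notin> {..<degree d} \<longrightarrow> v i j = 0"
  proof (intro ballI allI impI)
    fix i j assume "j \<notin> {..<degree d}"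
    then have "j \<ge> degree d" by auto
    then show "v i j = 0" unfolding v_def
      using degree_mod_less[OF assms(1), of "f ^ i"] by (auto intro: coeff_eq_0)
  qed
  obtain la where la: "\<exists>i\<in>{..degree d}. la i \<noteq> 0" "\<forall>j. (\<Sum>i\<in>{..degree d}. la i * v i j) = 0"
    using dep_lemma[of "{..<degree d}" "{..degree d}" v] supp by auto
  define P where "P = (\<Sum>i\<in>{..degree d}. monom (la i) i)"
  have "P \<noteq> 0"
  proof
    assume "P = 0"
    obtain i0 where "i0 \<in> {..degree d}" "la i0 \<noteq> 0" using la(1) by blast
    moreover have "coeff P i0 = la i0"
      using \<open>i0 \<in> {..degree d}\<close> by (simp add: P_def coeff_sum)
    ultimately show False using \<open>P = 0\<close> by simp
  qed
  have PC: "pcompose P f = (\<Sum>i\<in>{..degree d}. smult (la i) (f ^ i))"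
    by (simp add: P_def pcompose_sum pcompose_monom')
  have Z: "(\<Sum>i\<in>{..degree d}. smult (la i) (f ^ i mod d)) = 0"
    by (rule poly_eqI) (use la(2) in \<open>simp add: coeff_sum v_def\<close>)
  have "pcompose P f = (\<Sum>i\<in>{..degree d}. smult (la i) (f ^ i mod d)) + (\<Sum>i\<in>{..degree d}. smult (la i) (d * (f ^ i div d)))"
    unfolding PC sum.distrib[symmetric] smult_add_right[symmetric]
    by (rule sum.cong) (simp_all add: mult.commute)
  also have "\<dots> = d * (\<Sum>i\<in>{..degree d}. smult (la i) (f ^ i div d))"
    using Z by (simp add: sum_distrib_left mult_smult_right)
  finally have "d dvd pcompose P f" by simp
  with \<open>P \<noteq> 0\<close> show ?thesis by blast
qed

lemma admissible_exists:
  fixes f :: "'a::field_char_0 poly"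
  assumes "degree f > 0"
  shows "\<exists>g. admissible f g"
proof -
  have d: "pderiv f \<noteq> 0" using assms by (simp add: pderiv_eq_0_iff)
  obtain P where P: "P \<noteq> 0" "pderiv f dvd pcompose P f" using exists_mult_in_kf[OF d assms] by blast
  then obtain g where g: "pcompose P f = pderiv f * g" by (auto elim: dvdE)
  have "pcompose P f \<noteq> 0" using P(1) assms pcompose_eq_0 by blast
  then have "g \<noteq> 0" using g by auto
  moreover have "in_kf f (pderiv f * g)" unfolding in_kf_def using g by metis
  ultimately show ?thesis unfolding admissible_def by blast
qed


lemma in_kf_smult: "in_kf f (pderiv f * g) \<Longrightarrow> in_kf f (pderiv f * smult c g)"
  unfolding in_kf_def by (metis mult_smult_right pcompose_smult)

lemma in_kf_diff: "in_kf f (pderiv f * g1) \<Longrightarrow> in_kf f (pderiv f * g2) \<Longrightarrow> in_kf f (pderiv f * (g1 - g2))"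
  unfolding in_kf_def by (metis right_diff_distrib pcompose_diff)

lemma gf_admissible:
  fixes f :: "'a::field_char_0 poly"
  assumes "degree f > 0"
  shows "admissible f (gf f)"
proof -
  define Q where "Q g \<longleftrightarrow> admissible f g \<and> lead_coeff g = 1 \<and> (\<forall>h. admissible f h \<longrightarrow> degree g \<le> degree h)" for g
  have ex: "\<exists>n. \<exists>g. admissible f g \<and> degree g = n" using admissible_exists[OF assms] by blast
  define n where "n = (LEAST n. \<exists>g. admissible f g \<and> degree g = n)"
  obtain g0 where g0: "admissible f g0" "degree g0 = n"
    using LeastI_ex[OF ex] unfolding n_def by blast
  have nmin: "n \<le> degree h" if "admissible f h" for h
    unfolding n_def by (rule Least_le) (use that in blast)
  define g1 where "g1 = smult (1 / lead_coeff g0) g0"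
  have g0nz: "g0 \<noteq> 0" using g0 by (simp add: admissible_def)
  have "Q g1"
  proof -
    have "admissible f g1" using g0(1) g0nz in_kf_smult[of f g0 "1 / lead_coeff g0"]
      unfolding admissible_def g1_def by simp
    moreover have "lead_coeff g1 = 1" using g0nz by (simp add: g1_def)
    moreover have "degree g1 = n"
    proof -
      have "lead_coeff g0 \<noteq> 0" using g0nz by simp
      then show ?thesis using g0(2) unfolding g1_def by (subst degree_smult_eq) simp
    qed
    ultimately show ?thesis using nmin unfolding Q_def by auto
  qed
  moreover have "g = g1" if "Q g" for g
  proof (rule ccontr)
    assume ne: "g \<noteq> g1"
    have dg: "degree g = degree g1" using \<open>Q g\<close> \<open>Q g1\<close> unfolding Q_def by (meson le_antisym)
    define d where "d = g - g1"
    have dnz: "d \<noteq> 0" using ne by (simp add: d_def)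
    have ad: "admissible f d" using \<open>Q g\<close> \<open>Q g1\<close> dnz
      unfolding Q_def admissible_def d_def by (auto intro: in_kf_diff)
    have le: "degree d \<le> degree g" unfolding d_def using dg by (simp add: degree_diff_le)
    have "coeff d (degree g) = 0" using \<open>Q g\<close> \<open>Q g1\<close> dg unfolding Q_def d_def by simp
    then have "degree d \<noteq> degree g" using dnz by (metis leading_coeff_0_iff)
    with le have "degree d < degree g" by simp
    moreover have "degree g \<le> degree d" using \<open>Q g\<close> ad unfolding Q_def by blast
    ultimately show False by simp
  qed
  ultimately have "\<exists>!g. Q g" by blast
  then have "Q (gf f)" unfolding gf_def Q_def[symmetric] by (rule theI')
  then show ?thesis unfolding Q_def by blast
qed


lemma smult_sum_right: "smult a (\<Sum>i\<in>S. g i) = (\<Sum>i\<in>S. smult a (g i))"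
  by (induct S rule: infinite_finite_induct) (auto simp: smult_add_right)

lemma pderiv_sum': "pderiv (\<Sum>i\<in>S. g i) = (\<Sum>i\<in>S. pderiv (g i))"
  by (induct S rule: infinite_finite_induct) (auto simp: pderiv_add)

lemma antideriv:
  fixes p :: "'a::field_char_0 poly"
  shows "\<exists>c. pderiv c = p"
proof -
  define c where "c = (\<Sum>i\<le>degree p. monom (coeff p i / of_nat (Suc i)) (Suc i))"
  have "pderiv c = (\<Sum>i\<le>degree p. monom (coeff p i) i)"
    unfolding c_def pderiv_sum' by (rule sum.cong) (simp_all add: pderiv_monom del: of_nat_Suc)
  then show ?thesis using poly_as_sum_of_monoms by metis
qed

lemma wbr_add_right: "wbr y (a + b) = wbr y a + wbr y b"
  by (simp add: wbr_def pderiv_add algebra_simps)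

lemma wbr_sum_left: "wbr (\<Sum>i\<in>I. smult (la i) (x i)) y = (\<Sum>i\<in>I. smult (la i) (wbr (x i) y))"
  by (simp add: wbr_def pderiv_sum' pderiv_smult sum_distrib_left sum_distrib_right
      sum_subtractf smult_diff_right)

lemma wbr_sum_right: "wbr y (\<Sum>i\<in>I. smult (la i) (x i)) = (\<Sum>i\<in>I. smult (la i) (wbr y (x i)))"
  by (simp add: wbr_def pderiv_sum' pderiv_smult sum_distrib_left sum_distrib_right
      sum_subtractf smult_diff_right)

lemma lie_sum:
  assumes "lie_subalg L" "finite I" "\<forall>i\<in>I. x i \<in> L"
  shows "(\<Sum>i\<in>I. smult (la i) (x i)) \<in> L"
  using assms(2,3)
proof (induction I rule: finite_induct)
  case empty then show ?case using assms(1) by (simp add: lie_subalg_def)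
next
  case (insert i I)
  then show ?case using assms(1) unfolding lie_subalg_def by simp
qed

definition rep :: "'a::field poly set \<Rightarrow> 'a poly set \<Rightarrow> 'a poly \<Rightarrow> ('a poly \<Rightarrow> 'a) \<Rightarrow> bool" where
  "rep L B x c \<longleftrightarrow> (\<exists>l\<in>L. x = l + (\<Sum>b\<in>B. smult (c b) b))"

lemma rep_add:
  assumes "\<forall>x\<in>L. \<forall>y\<in>L. x + y \<in> L" "rep L B x c" "rep L B y d"
  shows "rep L B (x + y) (\<lambda>b. c b + d b)"
proof -
  obtain l1 l2 where "l1 \<in> L" "l2 \<in> L" "x = l1 + (\<Sum>b\<in>B. smult (c b) b)" "y = l2 + (\<Sum>b\<in>B. smult (d b) b)"
    using assms(2,3) unfolding rep_def by blast
  then have "x + y = (l1 + l2) + (\<Sum>b\<in>B. smult (c b + d b) b)"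
    by (simp add: smult_add_left sum.distrib algebra_simps)
  then show ?thesis unfolding rep_def using assms(1) \<open>l1 \<in> L\<close> \<open>l2 \<in> L\<close> by blast
qed

lemma rep_smult:
  assumes "\<forall>c. \<forall>x\<in>L. smult c x \<in> L" "rep L B x c"
  shows "rep L B (smult a x) (\<lambda>b. a * c b)"
proof -
  obtain l where "l \<in> L" "x = l + (\<Sum>b\<in>B. smult (c b) b)"
    using assms(2) unfolding rep_def by blast
  then have "smult a x = smult a l + (\<Sum>b\<in>B. smult (a * c b) b)"
    by (simp add: smult_add_right smult_sum_right)
  then show ?thesis unfolding rep_def using assms(1) \<open>l \<in> L\<close> by blast
qed

lemma rep_sum:
  assumes "lie_subalg L" "finite I" "\<forall>i\<in>I. rep L B (x i) (c i)"
  shows "rep L B (\<Sum>i\<in>I. smult (la i) (x i)) (\<lambda>b. \<Sum>i\<in>I. la i * c i b)"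
  using assms(2,3)
proof (induction I rule: finite_induct)
  case empty
  have "(0::'a poly) = 0 + (\<Sum>b\<in>B. smult 0 b)" by simp
  then show ?case using assms(1) unfolding rep_def lie_subalg_def by force
next
  case (insert i I)
  have "rep L B (smult (la i) (x i)) (\<lambda>b. la i * c i b)"
    using insert.prems assms(1) unfolding lie_subalg_def by (intro rep_smult) auto
  then have "rep L B (smult (la i) (x i) + (\<Sum>i\<in>I. smult (la i) (x i))) (\<lambda>b. la i * c i b + (\<Sum>i\<in>I. la i * c i b))"
    using insert assms(1) unfolding lie_subalg_def by (intro rep_add) auto
  then show ?case using insert.hyps by simp
qed

lemma rep_in:
  assumes "rep L B x c" "\<forall>b\<in>B. c b = 0"
  shows "x \<in> L"
  using assms unfolding rep_def by auto


lemma rep_unique: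
  assumes L: "lie_subalg L" and fB: "finite B"
    and minimal: "\<forall>B'. finite B' \<and> (\<forall>x\<in>M. \<exists>c. rep L B' x c) \<longrightarrow> card B \<le> card B'"
    and P: "\<forall>x\<in>M. \<exists>c. rep L B x c"
    and rc: "rep L B x c" and rd: "rep L B x d" and b0: "b0 \<in> B"
  shows "c b0 = d b0"
proof (rule ccontr)
  assume ne: "c b0 \<noteq> d b0"
  define del where "del = c b0 - d b0"
  have dnz: "del \<noteq> 0" using ne by (simp add: del_def)
  define B' where "B' = B - {b0}"
  have Lad: "\<forall>x\<in>L. \<forall>y\<in>L. x + y \<in> L" and Lsm: "\<forall>c. \<forall>x\<in>L. smult c x \<in> L"
    using L unfolding lie_subalg_def by auto
  obtain l1 l2 where l12: "l1 \<in> L" "l2 \<in> L" "x = l1 + (\<Sum>b\<in>B. smult (c b) b)" "x = l2 + (\<Sum>b\<in>B. smult (d b) b)"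
    using rc rd unfolding rep_def by blast
  have sd: "(\<Sum>b\<in>B. smult (c b - d b) b) = (\<Sum>b\<in>B. smult (c b) b) - (\<Sum>b\<in>B. smult (d b) b)"
    by (simp add: smult_diff_left sum_subtractf)
  have s0: "(l1 - l2) + (\<Sum>b\<in>B. smult (c b - d b) b) = 0"
  proof -
    define S1 where "S1 = (\<Sum>b\<in>B. smult (c b) b)"
    define S2 where "S2 = (\<Sum>b\<in>B. smult (d b) b)"
    have "l1 + S1 = l2 + S2" using l12 unfolding S1_def S2_def by simp
    then have "(l1 - l2) + (S1 - S2) = 0" by (simp add: algebra_simps)
    then show ?thesis unfolding sd S1_def S2_def .
  qed
  have s1: "(\<Sum>b\<in>B. smult (c b - d b) b) = smult del b0 + (\<Sum>b\<in>B'. smult (c b - d b) b)"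
    unfolding B'_def del_def using fB b0 by (simp add: sum.remove)
  have H: "smult del b0 = - (l1 - l2) - (\<Sum>b\<in>B'. smult (c b - d b) b)"
    using s0 unfolding s1 by (simp add: algebra_simps eq_neg_iff_add_eq_0)
  have "\<forall>y\<in>M. \<exists>e. rep L B' y e"
  proof
    fix y assume "y \<in> M"
    then obtain e l where el: "l \<in> L" "y = l + (\<Sum>b\<in>B. smult (e b) b)" using P unfolding rep_def by blast
    define t where "t = e b0 / del"
    have "smult (e b0) b0 = smult t (smult del b0)" using dnz by (simp add: t_def)
    also have "\<dots> = - smult t (l1 - l2) - (\<Sum>b\<in>B'. smult (t * (c b - d b)) b)"
      unfolding H by (simp add: smult_diff_right smult_sum_right)
    finally have e0: "smult (e b0) b0 = - smult t (l1 - l2) - (\<Sum>b\<in>B'. smult (t * (c b - d b)) b)" .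
    have "y = l + smult (e b0) b0 + (\<Sum>b\<in>B'. smult (e b) b)"
      unfolding el(2) B'_def using fB b0 by (simp add: sum.remove add.assoc)
    also have "\<dots> = (l + smult (-t) (l1 + smult (-1) l2)) + (\<Sum>b\<in>B'. smult (e b - t * (c b - d b)) b)"
      unfolding e0 by (simp add: smult_diff_left sum_subtractf algebra_simps smult_add_right smult_add_left sum.distrib)
    finally have "y = (l + smult (-t) (l1 + smult (-1) l2)) + (\<Sum>b\<in>B'. smult (e b - t * (c b - d b)) b)" .
    moreover have "l + smult (-t) (l1 + smult (-1) l2) \<in> L" using Lad Lsm el(1) l12(1,2) by blast
    ultimately have "rep L B' y (\<lambda>b. e b - t * (c b - d b))" unfolding rep_def by blast
    then show "\<exists>e. rep L B' y e" by blast
  qed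
  moreover have "finite B'" using fB by (simp add: B'_def)
  ultimately have "card B \<le> card B'" using minimal by blast
  moreover have "card B' < card B" unfolding B'_def using fB b0 by (metis card_Diff1_less)
  ultimately show False by simp
qed


lemma wbr_Lf:
  assumes "pderiv f * h = pcompose r f"
  shows "wbr (pcompose p f * h) (pcompose q f * h) = pcompose (r * (p * pderiv q - pderiv p * q)) f * h"
  by (simp add: wbr_def pderiv_mult pderiv_pcompose pcompose_mult pcompose_diff assms[symmetric] algebra_simps)

theorem mainTheorem3:
  fixes f :: "'a::field_char_0 poly" and L :: "'a poly set"
  assumes "degree f > 0"
    and "lie_subalg L"
    and "L \<subseteq> Lf f"
    and "fin_codim L (Lf f)"
  shows "\<exists>g. g \<noteq> 0 \<and> in_kf f (pderiv f * g) \<and> Lfg f g \<subseteq> L"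
proof -
  note L = assms(2)
  have Lad: "\<forall>x\<in>L. \<forall>y\<in>L. x + y \<in> L" and Lsm: "\<forall>c. \<forall>x\<in>L. smult c x \<in> L"
    and Lbr: "\<forall>x\<in>L. \<forall>y\<in>L. wbr x y \<in> L" and L0: "0 \<in> L"
    using L unfolding lie_subalg_def by auto
  define h where "h = gf f"
  have hnz: "h \<noteq> 0" and "in_kf f (pderiv f * h)"
    using gf_admissible[OF assms(1)] unfolding h_def admissible_def by auto
  then obtain r where r: "pderiv f * h = pcompose r f" unfolding in_kf_def by blast
  define M where "M = Lf f"
  have M_def': "M = {pcompose p f * h | p. True}" unfolding M_def Lf_def Lfg_def h_def ..
  have memM: "pcompose p f * h \<in> M" for p unfolding M_def' by blast
  have Mad: "\<forall>x\<in>M. \<forall>y\<in>M. x + y \<in> M"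
  proof (intro ballI)
    fix x y assume "x \<in> M" "y \<in> M"
    then obtain p q where "x = pcompose p f * h" "y = pcompose q f * h" unfolding M_def' by blast
    then have "x + y = pcompose (p + q) f * h" by (simp add: pcompose_add distrib_right)
    then show "x + y \<in> M" using memM by simp
  qed
  have Msm: "\<forall>c. \<forall>x\<in>M. smult c x \<in> M"
  proof (intro ballI allI)
    fix c x assume "x \<in> M"
    then obtain p where "x = pcompose p f * h" unfolding M_def' by blast
    then have "smult c x = pcompose (smult c p) f * h" by (simp add: pcompose_smult)
    then show "smult c x \<in> M" using memM by simp
  qed
  have Mbr: "\<forall>x\<in>M. \<forall>y\<in>M. wbr x y \<in> M"
    unfolding M_def' using wbr_Lf[OF r] by blast
  define Pb where "Pb B \<longleftrightarrow> finite B \<and> (\<forall>x\<in>M. \<exists>c. rep L B x c)" for B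
  obtain B0 where B0: "finite B0" "\<forall>x\<in>M. \<exists>l\<in>L. \<exists>c. x = l + (\<Sum>b\<in>B0. smult (c b) b)"
    using assms(4) unfolding fin_codim_def M_def by blast
  have "\<forall>x\<in>M. \<exists>c. rep L B0 x c"
  proof
    fix x assume "x \<in> M"
    then obtain l c where "l \<in> L" "x = l + (\<Sum>b\<in>B0. smult (c b) b)" using B0(2) by blast
    then have "rep L B0 x c" unfolding rep_def by blast
    then show "\<exists>c. rep L B0 x c" by blast
  qed
  then have "Pb B0" using B0(1) unfolding Pb_def by blast
  then have "\<exists>B. Pb B" by blast
  then have exn: "\<exists>n. \<exists>B. Pb B \<and> card B = n" by blast
  define n where "n = (LEAST n. \<exists>B. Pb B \<and> card B = n)"
  obtain B where B: "Pb B" "card B = n" using LeastI_ex[OF exn] unfolding n_def by blast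
  have minimal: "\<forall>B'. finite B' \<and> (\<forall>x\<in>M. \<exists>c. rep L B' x c) \<longrightarrow> card B \<le> card B'"
  proof (intro allI impI)
    fix B' assume "finite B' \<and> (\<forall>x\<in>M. \<exists>c. rep L B' x c)"
    then have "Pb B'" unfolding Pb_def by blast
    then have "\<exists>B. Pb B \<and> card B = card B'" by blast
    then have "n \<le> card B'" unfolding n_def by (rule Least_le)
    then show "card B \<le> card B'" using B(2) by simp
  qed
  have fB: "finite B" and PB: "\<forall>x\<in>M. \<exists>c. rep L B x c" using B(1) unfolding Pb_def by auto
  note uniq = rep_unique[OF L fB minimal PB]
  define cv where "cv x b = (if b \<in> B then (SOME c. rep L B x c) b else 0)" for x b
  have cv_rep: "rep L B x (cv x)" if "x \<in> M" for x
  proof -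
    define c0 where "c0 = (SOME c. rep L B x c)"
    have "\<exists>c. rep L B x c" using PB that by blast
    then have "rep L B x c0" unfolding c0_def by (rule someI_ex)
    then obtain l where l: "l \<in> L" "x = l + (\<Sum>b\<in>B. smult (c0 b) b)" unfolding rep_def by blast
    have "(\<Sum>b\<in>B. smult (c0 b) b) = (\<Sum>b\<in>B. smult (cv x b) b)"
      by (rule sum.cong) (simp_all add: cv_def c0_def)
    then show ?thesis unfolding rep_def using l by auto
  qed
  have cv_eq: "cv x b = c b" if "x \<in> M" "rep L B x c" "b \<in> B" for x c b
    using uniq[OF cv_rep[OF that(1)] that(2,3)] .
  have cv_out: "cv x b = 0" if "b \<notin> B" for x b using that by (simp add: cv_def)
  have cv_add: "\<forall>x\<in>M. \<forall>y\<in>M. \<forall>j. cv (x+y) j = cv x j + cv y j"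
  proof (intro ballI allI)
    fix x y j assume xy: "x \<in> M" "y \<in> M"
    have rr: "rep L B (x + y) (\<lambda>b. cv x b + cv y b)" using rep_add[OF Lad cv_rep[OF xy(1)] cv_rep[OF xy(2)]] .
    have xyM: "x + y \<in> M" using Mad xy by blast
    show "cv (x+y) j = cv x j + cv y j"
    proof (cases "j \<in> B")
      case True then show ?thesis using cv_eq[OF xyM rr True] by simp
    next
      case False then show ?thesis by (simp add: cv_out)
    qed
  qed
  have cv_sm: "\<forall>c. \<forall>x\<in>M. \<forall>j. cv (smult c x) j = c * cv x j"
  proof (intro ballI allI)
    fix c x j assume x: "x \<in> M"
    have rr: "rep L B (smult c x) (\<lambda>b. c * cv x b)" using rep_smult[OF Lsm cv_rep[OF x]] .
    have xM: "smult c x \<in> M" using Msm x by blast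
    show "cv (smult c x) j = c * cv x j"
    proof (cases "j \<in> B")
      case True then show ?thesis using cv_eq[OF xM rr True] by simp
    next
      case False then show ?thesis by (simp add: cv_out)
    qed
  qed
  have cv_supp: "\<forall>x\<in>M. \<forall>j. j \<notin> B \<longrightarrow> cv x j = 0" using cv_out by blast
  obtain C where C: "finite C" "C \<subseteq> M" "\<forall>x\<in>M. \<exists>mu. \<forall>j. cv x j = (\<Sum>c\<in>C. mu c * cv c j)"
    using span_lemma[OF fB Mad Msm cv_add cv_sm cv_supp] by blast
  have decomp: "\<exists>l\<in>L. \<exists>mu. x = l + (\<Sum>c\<in>C. smult (mu c) c)" if "x \<in> M" for x
  proof -
    have "\<exists>mu. \<forall>j. cv x j = (\<Sum>c\<in>C. mu c * cv c j)" using C(3) that by (rule bspec)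
    then obtain mu where mu: "\<forall>j. cv x j = (\<Sum>c\<in>C. mu c * cv c j)" by (elim exE)
    have r1: "rep L B (\<Sum>c\<in>C. smult (mu c) c) (\<lambda>b. \<Sum>c\<in>C. mu c * cv c b)"
    proof -
      have "\<forall>c\<in>C. rep L B c (cv c)" using C(2) cv_rep by blast
      then show ?thesis by (rule rep_sum[OF L C(1)])
    qed
    have r2: "rep L B (smult (-1) (\<Sum>c\<in>C. smult (mu c) c)) (\<lambda>b. (-1) * (\<Sum>c\<in>C. mu c * cv c b))"
      by (rule rep_smult[OF Lsm r1])
    have "rep L B (x + smult (-1) (\<Sum>c\<in>C. smult (mu c) c)) (\<lambda>b. cv x b + (-1) * (\<Sum>c\<in>C. mu c * cv c b))"
      by (rule rep_add[OF Lad cv_rep[OF that] r2])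
    then have lL: "x + smult (-1) (\<Sum>c\<in>C. smult (mu c) c) \<in> L"
    proof (rule rep_in, intro ballI)
      fix b
      have e: "cv x b = (\<Sum>c\<in>C. mu c * cv c b)" by (rule mu[rule_format])
      show "cv x b + (-1) * (\<Sum>c\<in>C. mu c * cv c b) = 0" by (simp only: e) simp
    qed
    have xe: "x = (x + smult (-1) (\<Sum>c\<in>C. smult (mu c) c)) + (\<Sum>c\<in>C. smult (mu c) c)" by simp
    show ?thesis by (rule bexI[OF exI[of _ mu] lL]) (rule xe)
  qed
  \<comment> \<open>find a nonzero element acting into L\<close>
  define S where "S = (insert None (Some ` C)) \<times> B"
  have fS: "finite S" unfolding S_def using C(1) fB by simp
  define xi where "xi i = pcompose (monom 1 i) f * h" for i :: nat
  have xiM: "xi i \<in> M" for i unfolding xi_def by (rule memM)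
  define v where "v i j = (case j of (None, b) \<Rightarrow> cv (xi i) b
      | (Some c, b) \<Rightarrow> (if c \<in> C then cv (wbr (xi i) c) b else 0))" for i j
  have vsupp: "\<forall>i\<in>{..card S}. \<forall>j. j \<notin> S \<longrightarrow> v i j = 0"
  proof (intro ballI allI impI)
    fix i j assume "j \<notin> S"
    then show "v i j = 0"
    proof (cases j)
      case (Pair oo b)
      show ?thesis
      proof (cases oo)
        case None
        then have "b \<notin> B" using \<open>j \<notin> S\<close> Pair unfolding S_def by auto
        then show ?thesis using Pair None by (simp add: v_def cv_out)
      next
        case (Some c)
        show ?thesis
        proof (cases "c \<in> C")
          case True
          then have "b \<notin> B" using \<open>j \<notin> S\<close> Pair Some unfolding S_def by auto
          then show ?thesis using Pair Some by (simp add: v_def cv_out)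
        next
          case False
          then show ?thesis using Pair Some by (simp add: v_def)
        qed
      qed
    qed
  qed
  obtain la where la: "\<exists>i\<in>{..card S}. la i \<noteq> 0" "\<forall>j. (\<Sum>i\<in>{..card S}. la i * v i j) = 0"
    using dep_lemma[OF fS _ _ vsupp] by auto
  define I where "I = {..card S}"
  define m where "m = (\<Sum>i\<in>I. smult (la i) (xi i))"
  define P where "P = (\<Sum>i\<in>I. monom (la i) i)"
  have mP: "m = pcompose P f * h"
    unfolding m_def P_def xi_def by (simp add: pcompose_sum pcompose_monom' sum_distrib_right)
  have "P \<noteq> 0"
  proof
    assume "P = 0"
    obtain i0 where "i0 \<in> I" "la i0 \<noteq> 0" using la(1) unfolding I_def by blast
    moreover have "coeff P i0 = la i0"
      using \<open>i0 \<in> I\<close> by (simp add: P_def coeff_sum I_def)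
    ultimately show False using \<open>P = 0\<close> by simp
  qed
  then have "pcompose P f \<noteq> 0" using assms(1) pcompose_eq_0 by blast
  then have mnz: "m \<noteq> 0" using hnz mP by simp
  have mL: "m \<in> L"
  proof -
    have "rep L B m (\<lambda>b. \<Sum>i\<in>I. la i * cv (xi i) b)"
    proof -
      have rr: "\<forall>i\<in>I. rep L B (xi i) (cv (xi i))" using cv_rep xiM by blast
      have fI: "finite I" by (simp add: I_def)
      show ?thesis unfolding m_def by (rule rep_sum[OF L fI rr])
    qed
    then show ?thesis
    proof (rule rep_in, intro ballI)
      fix b assume "b \<in> B"
      show "(\<Sum>i\<in>I. la i * cv (xi i) b) = 0" using la(2)[rule_format, of "(None, b)"]
        unfolding I_def v_def by simp
    qed
  qed
  have mC: "wbr m c \<in> L" if "c \<in> C" for c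
  proof -
    have wM: "wbr (xi i) c \<in> M" for i using Mbr xiM C(2) that by blast
    have "wbr m c = (\<Sum>i\<in>I. smult (la i) (wbr (xi i) c))" unfolding m_def by (rule wbr_sum_left)
    moreover have "rep L B (\<Sum>i\<in>I. smult (la i) (wbr (xi i) c)) (\<lambda>b. \<Sum>i\<in>I. la i * cv (wbr (xi i) c) b)"
    proof -
      have rr: "\<forall>i\<in>I. rep L B (wbr (xi i) c) (cv (wbr (xi i) c))" using cv_rep wM by blast
      have fI: "finite I" by (simp add: I_def)
      show ?thesis by (rule rep_sum[OF L fI rr])
    qed
    ultimately have "rep L B (wbr m c) (\<lambda>b. \<Sum>i\<in>I. la i * cv (wbr (xi i) c) b)" by simp
    then show ?thesis
    proof (rule rep_in, intro ballI)
      fix b assume "b \<in> B"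
      show "(\<Sum>i\<in>I. la i * cv (wbr (xi i) c) b) = 0" using la(2)[rule_format, of "(Some c, b)"] that
        unfolding I_def v_def by simp
    qed
  qed
  have mact: "wbr m q \<in> L" if qM: "q \<in> M" for q
  proof -
    have "\<exists>l\<in>L. \<exists>mu. q = l + (\<Sum>c\<in>C. smult (mu c) c)" by (rule decomp[OF qM])
    then obtain l where l: "l \<in> L" and "\<exists>mu. q = l + (\<Sum>c\<in>C. smult (mu c) c)" by (elim bexE) 
    then obtain mu where "q = l + (\<Sum>c\<in>C. smult (mu c) c)" by (elim exE)
    with l have lm: "l \<in> L" "q = l + (\<Sum>c\<in>C. smult (mu c) c)" by auto
    have "wbr m q = wbr m l + (\<Sum>c\<in>C. smult (mu c) (wbr m c))"
      unfolding lm(2) wbr_add_right wbr_sum_right ..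
    moreover have "wbr m l \<in> L" using Lbr mL lm(1) by blast
    moreover have "(\<Sum>c\<in>C. smult (mu c) (wbr m c)) \<in> L" using lie_sum[OF L C(1)] mC by blast
    ultimately show ?thesis using Lad by simp
  qed
  define g where "g = pcompose (P * P * r) f * h"
  have rnz: "r \<noteq> 0"
  proof
    assume "r = 0"
    then have "pderiv f * h = 0" using r by simp
    moreover have "pderiv f \<noteq> 0" using assms(1) by (simp add: pderiv_eq_0_iff)
    ultimately show False using hnz by simp
  qed
  have "P * P * r \<noteq> 0" using \<open>P \<noteq> 0\<close> rnz by simp
  then have "pcompose (P * P * r) f \<noteq> 0" using assms(1) pcompose_eq_0 by blast
  then have gnz: "g \<noteq> 0" unfolding g_def using hnz by simp
  have "pderiv f * g = pcompose (P * P * r * r) f"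
    unfolding g_def using r by (simp add: pcompose_mult algebra_simps)
  then have gkf: "in_kf f (pderiv f * g)" unfolding in_kf_def by blast
  have "Lfg f g \<subseteq> L"
  proof
    fix y assume "y \<in> Lfg f g"
    then obtain p where y: "y = pcompose p f * g" unfolding Lfg_def by blast
    obtain c0 where c0: "pderiv c0 = p" using antideriv by blast
    have "wbr m (pcompose (P * c0) f * h) = pcompose (r * (P * pderiv (P * c0) - pderiv P * (P * c0))) f * h"
      unfolding mP by (rule wbr_Lf[OF r])
    also have "r * (P * pderiv (P * c0) - pderiv P * (P * c0)) = p * (P * P * r)"
      using c0 by (simp add: pderiv_mult algebra_simps)
    finally have "wbr m (pcompose (P * c0) f * h) = y"
      unfolding y g_def by (simp add: pcompose_mult algebra_simps)
    then show "y \<in> L" using mact[OF memM] by metis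
  qed
  then show ?thesis using gnz gkf by blast
qed

end
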